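(* Let $X$ be a compact metric space, $f\colon X\to X$ continuous, and $\bar x=(x_i)_{i\in\mathbb Z}$ a full orbit. For $k\in\mathbb N$ write $D_k=\overline{\{x_l: l\in\mathbb Z,\ k\nmid l\}}$. Then $$\mathrm{Per}(\bar x)=\{k\in\mathbb N:\exists N_0\in\mathbb N\ \text{with}\ x_{-N_0k}\notin D_k\},$$ $$\mathrm{Per}(\bar x)=\{k\in\mathbb N:\exists N_0\in\mathbb N\ \forall N\ge N_0\ \ x_{-Nk}\notin D_k\},$$ and $$\mathrm{Per}(\bar x)=\bigcup_{N=0}^{\infty}\{k\in\mathbb N: x_{-Nk}\notin D_k\}.$$
   Context: A full orbit is a sequence $\bar x=(x_i)_{i\in\mathbb Z}$ in $X$ with $f(x_i)=x_{i+1}$ for all $i$. $2^X$ is the space of nonempty closed subsets of $X$ with the Hausdorff metric, $2^f(C)=f(C)$. $\mathrm{Per}(\bar x)$ is the set of $k\in\mathbb N$ such that $\overline{\{x_{mk}:m\in\mathbb Z\}}$ is a periodic point of $2^f$ with fundamental period $k$. *)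

theory Defs
  imports "HOL-Analysis.Analysis"
begin

text \<open>Hyperspace 2^X: nonempty closed subsets of X (the Hausdorff metric plays no
role for periodicity). The induced map is 2^f(C) = f(C).\<close>
definition hyperspace :: "'a::metric_space set \<Rightarrow> 'a set set" where
  "hyperspace X = {C. C \<subseteq> X \<and> C \<noteq> {} \<and> closed C}"

definition induced_map :: "('a \<Rightarrow> 'a) \<Rightarrow> 'a set \<Rightarrow> 'a set" where
  "induced_map f C = f ` C"

definition periodic_fund :: "('b \<Rightarrow> 'b) \<Rightarrow> 'b \<Rightarrow> nat \<Rightarrow> bool" where
  "periodic_fund F c k \<longleftrightarrow> k > 0 \<and> (F ^^ k) c = c \<and> (\<forall>j. 0 < j \<and> j < k \<longrightarrow> (F ^^ j) c \<noteq> c)"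

definition full_orbit :: "'a set \<Rightarrow> ('a \<Rightarrow> 'a) \<Rightarrow> (int \<Rightarrow> 'a) \<Rightarrow> bool" where
  "full_orbit X f x \<longleftrightarrow> (\<forall>i. x i \<in> X \<and> f (x i) = x (i + 1))"

definition Per :: "'a::metric_space set \<Rightarrow> ('a \<Rightarrow> 'a) \<Rightarrow> (int \<Rightarrow> 'a) \<Rightarrow> nat set" where
  "Per X f x = {k. k > 0 \<and>
     (let C = closure (range (\<lambda>m::int. x (m * int k))) in
        C \<in> hyperspace X \<and> periodic_fund (induced_map f) C k)}"

definition Dset :: "(int \<Rightarrow> 'a::metric_space) \<Rightarrow> nat \<Rightarrow> 'a set" where
  "Dset x k = closure {x l | l. \<not> int k dvd l}"

end

theory Submission
  imports Defs
begin

definition Cj :: "(int \<Rightarrow> 'a::metric_space) \<Rightarrow> nat \<Rightarrow> int \<Rightarrow> 'a set" where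
  "Cj x k j = closure (range (\<lambda>m. x (m * int k + j)))"

lemma orbit_iter:
  assumes "full_orbit X f x"
  shows "(f^^n) (x i) = x (i + int n)"
  using assms by (induction n) (auto simp: full_orbit_def algebra_simps)

lemma closure_image_eq:
  fixes f :: "'a::metric_space \<Rightarrow> 'a"
  assumes "compact X" "continuous_on X f" "A \<subseteq> X"
  shows "f ` closure A = closure (f ` A)"
proof
  have cl: "closure A \<subseteq> X"
    using assms by (simp add: closure_minimal compact_imp_closed)
  show "f ` closure A \<subseteq> closure (f ` A)"
    by (rule image_closure_subset) (use cl assms continuous_on_subset closure_subset in \<open>auto intro: closure_subset[THEN subsetD]\<close>)
  have "compact (closure A)"
    using assms cl by (metis compact_Int_closed closed_closure inf.absorb_iff2)
  then have "compact (f ` closure A)"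
    using cl assms by (meson compact_continuous_image continuous_on_subset)
  then show "closure (f ` A) \<subseteq> f ` closure A"
    by (simp add: closure_minimal closure_subset compact_imp_closed image_mono)
qed

lemma Fpow_image: "(induced_map f ^^ n) A = (f^^n) ` A"
  by (induction n) (auto simp: induced_map_def image_comp)

lemma F_step:
  assumes "compact X" "continuous_on X f" "full_orbit X f x"
  shows "induced_map f (Cj x k j) = Cj x k (j + 1)"
proof -
  have sub: "range (\<lambda>m. x (m * int k + j)) \<subseteq> X"
    using assms(3) by (auto simp: full_orbit_def)
  have "f ` range (\<lambda>m. x (m * int k + j)) = range (\<lambda>m. x (m * int k + (j + 1)))"
    using assms(3) by (auto simp: full_orbit_def image_comp add.assoc)
  then show ?thesis
    unfolding induced_map_def Cj_def
    using closure_image_eq[OF assms(1,2) sub] by simp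
qed

lemma F_iter:
  assumes "compact X" "continuous_on X f" "full_orbit X f x"
  shows "(induced_map f ^^ n) (Cj x k j) = Cj x k (j + int n)"
  by (induction n) (simp_all add: F_step[OF assms] algebra_simps)

lemma Cj_shift: "Cj x k (j + int k) = Cj x k j"
proof -
  have "range (\<lambda>m. x (m * int k + (j + int k))) = range (\<lambda>m. x (m * int k + j))"
  proof (rule equalityI; clarsimp)
    fix m show "x (m * int k + (j + int k)) \<in> range (\<lambda>m. x (m * int k + j))"
      by (rule image_eqI[where x="m+1"]) (auto simp: algebra_simps)
  next
    fix m show "x (m * int k + j) \<in> range (\<lambda>m. x (m * int k + (j + int k)))"
      by (rule image_eqI[where x="m-1"]) (auto simp: algebra_simps)
  qed
  then show ?thesis by (simp add: Cj_def)
qed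

lemma Cj_shift_mult: "Cj x k (j + int t * int k) = Cj x k j"
proof (induction t)
  case (Suc t)
  have "j + int (Suc t) * int k = (j + int t * int k) + int k" by (simp add: algebra_simps)
  then show ?case using Suc Cj_shift by metis
qed simp

lemma closure_fin_UN:
  assumes "finite I"
  shows "closure (\<Union>i\<in>I. A i) = (\<Union>i\<in>I. closure (A i))"
proof
  show "closure (\<Union>i\<in>I. A i) \<subseteq> (\<Union>i\<in>I. closure (A i))"
    by (rule closure_minimal) (auto simp: assms closure_subset[THEN subsetD] intro!: closed_UN)
  show "(\<Union>i\<in>I. closure (A i)) \<subseteq> closure (\<Union>i\<in>I. A i)"
    by (auto intro: closure_mono[THEN subsetD, rotated])
qed

lemma Dset_eq:
  assumes "k > 0"
  shows "Dset x k = (\<Union>j\<in>{1..<int k}. Cj x k j)"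
proof -
  have "{x l | l. \<not> int k dvd l} = (\<Union>j\<in>{1..<int k}. range (\<lambda>m. x (m * int k + j)))"
  proof (rule equalityI; clarsimp)
    fix l assume "\<not> int k dvd l"
    then have "l mod int k \<noteq> 0" "l mod int k \<ge> 0" "l mod int k < int k"
      using assms by auto
    moreover have "l = (l div int k) * int k + l mod int k" by simp
    ultimately show "\<exists>j\<in>{1..<int k}. x l \<in> range (\<lambda>m. x (m * int k + j))"
      by (intro bexI[where x="l mod int k"] image_eqI[where x="l div int k"]) auto
  next
    fix j m assume "1 \<le> j" "j < int k"
    then have "\<not> int k dvd (m * int k + j)"
      by (metis dvd_add_right_iff dvd_triv_right zdvd_not_zless zero_less_one order_less_le_trans)
    then show "\<exists>l. x (m * int k + j) = x l \<and> \<not> int k dvd l" by blast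
  qed
  then show ?thesis
    unfolding Dset_def Cj_def by (simp add: closure_fin_UN)
qed


lemma Cj_invar:
  assumes "compact X" "continuous_on X f" "full_orbit X f x" "y \<in> Cj x k j"
  shows "(f^^(t*k)) y \<in> Cj x k j"
proof -
  have "(f^^(t*k)) y \<in> (induced_map f ^^ (t*k)) (Cj x k j)"
    using assms(4) by (simp add: Fpow_image)
  also have "\<dots> = Cj x k j"
    using F_iter[OF assms(1-3)] Cj_shift_mult by (metis of_nat_mult)
  finally show ?thesis .
qed

lemma Per_iff:
  assumes "compact X" "continuous_on X f" "full_orbit X f x" "k > 0"
  shows "k \<in> Per X f x \<longleftrightarrow> (\<forall>j. 0 < j \<and> j < k \<longrightarrow> Cj x k (int j) \<noteq> Cj x k 0)"
proof -
  have C0: "closure (range (\<lambda>m::int. x (m * int k))) = Cj x k 0" by (simp add: Cj_def)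
  have "Cj x k 0 \<subseteq> X"
    unfolding Cj_def using assms(1,3)
    by (intro closure_minimal) (auto simp: full_orbit_def compact_imp_closed)
  then have hyp: "Cj x k 0 \<in> hyperspace X"
    by (auto simp: hyperspace_def Cj_def)
  have per: "(induced_map f ^^ k) (Cj x k 0) = Cj x k 0"
    using F_iter[OF assms(1-3)] Cj_shift[of x k 0] by simp
  show ?thesis
  proof -
    have it: "(induced_map f ^^ n) (Cj x k 0) = Cj x k (int n)" for n
      using F_iter[OF assms(1-3), of n k 0] by simp
    show ?thesis
      apply (simp only: Per_def Let_def C0 mem_Collect_eq periodic_fund_def it)
      using hyp per assms(4) it by auto
  qed
qed

lemma not_D_mono:
  assumes "compact X" "continuous_on X f" "full_orbit X f x" "k > 0"
    and "x (- (int N0 * int k)) \<notin> Dset x k" "N \<ge> N0"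
  shows "x (- (int N * int k)) \<notin> Dset x k"
proof
  assume "x (- (int N * int k)) \<in> Dset x k"
  then obtain j where j: "j \<in> {1..<int k}" "x (- (int N * int k)) \<in> Cj x k j"
    using Dset_eq[OF assms(4), of x] by auto
  have "(f^^((N-N0)*k)) (x (- (int N * int k))) \<in> Cj x k j"
    by (rule Cj_invar[OF assms(1-3) j(2)])
  moreover have "(f^^((N-N0)*k)) (x (- (int N * int k))) = x (- (int N0 * int k))"
    using orbit_iter[OF assms(3)] assms(6) by (simp add: of_nat_diff algebra_simps)
  ultimately show False using j(1) assms(5) Dset_eq[OF assms(4), of x] by auto
qed

lemma Per_ex:
  assumes "compact X" "continuous_on X f" "full_orbit X f x" "k > 0"
  shows "k \<in> Per X f x \<longleftrightarrow> (\<exists>N::nat. x (- (int N * int k)) \<notin> Dset x k)"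
proof
  assume "\<exists>N::nat. x (- (int N * int k)) \<notin> Dset x k"
  then obtain N where N: "x (- (int N * int k)) \<notin> Dset x k" by blast
  have "x (- (int N * int k)) \<in> Cj x k 0"
    unfolding Cj_def by (rule closure_subset[THEN subsetD]) (rule image_eqI[where x="- int N"], auto)
  then show "k \<in> Per X f x"
    unfolding Per_iff[OF assms] using N Dset_eq[OF assms(4), of x] by force
next
  assume P: "k \<in> Per X f x"
  show "\<exists>N::nat. x (- (int N * int k)) \<notin> Dset x k"
  proof (rule ccontr)
    assume "\<not> ?thesis"
    then have all: "\<forall>N::nat. \<exists>j\<in>{1..<int k}. x (- (int N * int k)) \<in> Cj x k j"
      using Dset_eq[OF assms(4), of x] by auto
    define S where "S j = {N::nat. x (- (int N * int k)) \<in> Cj x k j}" for j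
    have "UNIV = (\<Union>j\<in>{1..<int k}. S j)" using all by (auto simp: S_def)
    then obtain j where j: "j \<in> {1..<int k}" "infinite (S j)"
      by (metis finite_UN_I finite_atLeastLessThan_int infinite_UNIV_nat)
    have sub: "Cj x k 0 \<subseteq> Cj x k j"
      unfolding Cj_def[of x k 0]
    proof (rule closure_minimal)
      show "closed (Cj x k j)" by (simp add: Cj_def)
      show "range (\<lambda>m. x (m * int k + 0)) \<subseteq> Cj x k j"
      proof clarify
        fix m :: int
        obtain N where N: "N \<ge> nat (-m)" "N \<in> S j"
          using j(2) infinite_nat_iff_unbounded_le by blast
        have c1: "(f^^(nat (m + int N) * k)) (x (- (int N * int k))) \<in> Cj x k j"
          using Cj_invar[OF assms(1-3)] N(2) by (simp add: S_def)
        have mN: "m + int N \<ge> 0" using N(1) by arith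
        moreover have "(f^^(nat (m + int N) * k)) (x (- (int N * int k))) = x (m * int k)"
          using orbit_iter[OF assms(3)] mN by (simp add: algebra_simps)
        ultimately show "x (m * int k + 0) \<in> Cj x k j" using c1 by simp
      qed
    qed
    define jn where "jn = nat j"
    have jn: "int jn = j" "0 < jn" "jn < k" using j(1) by (auto simp: jn_def)
    have step: "Cj x k (int n) \<subseteq> Cj x k (j + int n)" for n
    proof -
      have "(f^^n) ` Cj x k 0 \<subseteq> (f^^n) ` Cj x k j" using sub by (rule image_mono)
      then show ?thesis
        using F_iter[OF assms(1-3)] by (simp add: Fpow_image[symmetric])
    qed
    have chain: "Cj x k j \<subseteq> Cj x k (int (Suc t) * j)" for t
    proof (induction t)
      case (Suc t)
      have "Cj x k (int (Suc t) * j) \<subseteq> Cj x k (j + int (Suc t * jn))"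
        using step[of "Suc t * jn"] jn(1) by (simp add: algebra_simps)
      also have "j + int (Suc t * jn) = int (Suc (Suc t)) * j" using jn(1) by (simp add: algebra_simps)
      finally show ?case using Suc by blast
    qed simp
    have "Cj x k (int (Suc (k - 1)) * j) = Cj x k 0"
      using Cj_shift_mult[of x k 0 jn] jn assms(4) by (simp add: algebra_simps)
    then have "Cj x k j = Cj x k 0" using chain[of "k-1"] sub by auto
    then show False using P Per_iff[OF assms] jn by auto
  qed
qed

theorem lemma4p6:
  fixes X :: "'a::metric_space set" and f :: "'a \<Rightarrow> 'a" and x :: "int \<Rightarrow> 'a"
  assumes "compact X" and "continuous_on X f" and "f ` X \<subseteq> X"
    and "full_orbit X f x"
  shows "Per X f x = {k. k > 0 \<and> (\<exists>N0::nat. x (- (int N0 * int k)) \<notin> Dset x k)} \<and>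
         Per X f x = {k. k > 0 \<and> (\<exists>N0::nat. \<forall>N\<ge>N0. x (- (int N * int k)) \<notin> Dset x k)} \<and>
         Per X f x = (\<Union>N::nat. {k. k > 0 \<and> x (- (int N * int k)) \<notin> Dset x k})"
proof -
  have pos: "k \<in> Per X f x \<Longrightarrow> k > 0" for k by (simp add: Per_def)
  have A: "Per X f x = {k. k > 0 \<and> (\<exists>N0::nat. x (- (int N0 * int k)) \<notin> Dset x k)}"
    using Per_ex[OF assms(1,2,4)] pos by blast
  have B: "Per X f x = {k. k > 0 \<and> (\<exists>N0::nat. \<forall>N\<ge>N0. x (- (int N * int k)) \<notin> Dset x k)}"
    unfolding A using not_D_mono[OF assms(1,2,4)] by blast
  show ?thesis using A B by blast
qed

end
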